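(* Let $X_1,\ldots,X_{N_1+N_2}\in\mathbb{R}^D$ with $N_1,N_2\ge1$, viewed as two segments $\{X_n:n=1,\ldots,N_1\}$ and $\{X_n:n=N_1+1,\ldots,N_1+N_2\}$. For $0<t<N_1$, consider shifting the change point from $N_1$ to $N_1-t$, so that the segments become $\{X_n:n=1,\ldots,N_1-t\}$ and $\{X_n:n=N_1-t+1,\ldots,N_1+N_2\}$. Then the within-segment quadratic loss (sum of the quadratic losses of the two segments) is reduced by this operation if and only if $$\frac{N_1\,|\bar X_{0,N_1}-\bar X_{N_1-t,N_1}|^2}{N_1-t}>\frac{N_2\,|\bar X_{N_1,N_1+N_2}-\bar X_{N_1-t,N_1}|^2}{N_2+t},$$ where $\bar X_{n_1,n_2}$ denotes the sample mean of $\{X_n:n=n_1+1,\ldots,n_2\}$.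
   Context: Quadratic loss of a segment $x_a,\ldots,x_b\in\mathbb{R}^D$: $\sum_{n=a}^b|x_n-\bar x|^2$, where $\bar x$ is the sample mean of the segment and $|\cdot|$ is the Euclidean norm. *)

theory Defs
  imports "HOL-Analysis.Analysis"
begin

definition seg_mean :: "(nat \<Rightarrow> 'a::real_vector) \<Rightarrow> nat \<Rightarrow> nat \<Rightarrow> 'a" where
  "seg_mean X n1 n2 = (1 / real (n2 - n1)) *\<^sub>R (\<Sum>n\<in>{n1<..n2}. X n)"

definition seg_loss :: "(nat \<Rightarrow> 'a::real_inner) \<Rightarrow> nat \<Rightarrow> nat \<Rightarrow> real" where
  "seg_loss X n1 n2 = (\<Sum>n\<in>{n1<..n2}. (norm (X n - seg_mean X n1 n2))\<^sup>2)"

end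

theory Submission
  imports Defs
begin

definition mn :: "(nat \<Rightarrow> 'a::real_vector) \<Rightarrow> nat set \<Rightarrow> 'a" where
  "mn X S = (1 / real (card S)) *\<^sub>R sum X S"

lemma mn_sum: "finite S \<Longrightarrow> S \<noteq> {} \<Longrightarrow> real (card S) *\<^sub>R mn X S = sum X S"
  by (simp add: mn_def)

lemma parallel:
  fixes X :: "nat \<Rightarrow> 'a::real_inner"
  assumes "finite S" "S \<noteq> {}"
  shows "(\<Sum>n\<in>S. (norm (X n - y))\<^sup>2) = (\<Sum>n\<in>S. (norm (X n - mn X S))\<^sup>2) + real (card S) * (norm (mn X S - y))\<^sup>2"
proof -
  let ?m = "mn X S"
  have e: "(norm (X n - y))\<^sup>2 = (norm (X n - ?m))\<^sup>2 + 2 * inner (X n - ?m) (?m - y) + (norm (?m - y))\<^sup>2" for n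
  proof -
    have "X n - y = (X n - ?m) + (?m - y)" by simp
    then have "(norm (X n - y))\<^sup>2 = (norm ((X n - ?m) + (?m - y)))\<^sup>2" by metis
    also have "\<dots> = (norm (X n - ?m))\<^sup>2 + 2 * inner (X n - ?m) (?m - y) + (norm (?m - y))\<^sup>2"
      using dot_norm[of "X n - ?m" "?m - y"] by simp
    finally show ?thesis .
  qed
  have z: "(\<Sum>n\<in>S. inner (X n - ?m) (?m - y)) = 0"
  proof -
    have "(\<Sum>n\<in>S. inner (X n - ?m) (?m - y)) = inner (\<Sum>n\<in>S. X n - ?m) (?m - y)"
      by (simp add: inner_sum_left)
    also have "(\<Sum>n\<in>S. X n - ?m) = sum X S - real (card S) *\<^sub>R ?m"
      by (simp add: sum_subtractf sum_constant_scaleR)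
    also have "\<dots> = 0" by (simp add: mn_sum[OF assms])
    finally show ?thesis by simp
  qed
  show ?thesis
    by (simp add: e sum.distrib sum_distrib_left[symmetric] z)
qed

lemma union_loss:
  fixes X :: "nat \<Rightarrow> 'a::real_inner"
  assumes "finite S" "S \<noteq> {}" "finite T" "T \<noteq> {}" "S \<inter> T = {}"
  shows "(\<Sum>n\<in>S \<union> T. (norm (X n - mn X (S \<union> T)))\<^sup>2) =
    (\<Sum>n\<in>S. (norm (X n - mn X S))\<^sup>2) + (\<Sum>n\<in>T. (norm (X n - mn X T))\<^sup>2)
    + real (card S) * real (card T) / (real (card S) + real (card T)) * (norm (mn X S - mn X T))\<^sup>2"
proof -
  define p where "p = real (card S)"
  define q where "q = real (card T)"
  define w where "w = mn X (S \<union> T)"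
  have p: "p > 0" using assms p_def by (simp add: card_gt_0_iff)
  have q: "q > 0" using assms q_def by (simp add: card_gt_0_iff)
  have cU: "real (card (S \<union> T)) = p + q" using assms p_def q_def by (simp add: card_Un_disjoint)
  have "(p + q) *\<^sub>R w = sum X (S \<union> T)" using mn_sum[of "S \<union> T" X] assms cU w_def by simp
  also have "\<dots> = sum X S + sum X T" using assms by (simp add: sum.union_disjoint)
  also have "\<dots> = p *\<^sub>R mn X S + q *\<^sub>R mn X T" using assms by (simp add: mn_sum p_def q_def)
  finally have hw: "(p + q) *\<^sub>R w = p *\<^sub>R mn X S + q *\<^sub>R mn X T" .
  have d1: "mn X S - w = (q / (p + q)) *\<^sub>R (mn X S - mn X T)"
  proof -
    have "(p + q) *\<^sub>R (mn X S - w) = q *\<^sub>R (mn X S - mn X T)"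
      using hw by (simp add: algebra_simps)
    then have "(1/(p+q)) *\<^sub>R ((p + q) *\<^sub>R (mn X S - w)) = (1/(p+q)) *\<^sub>R (q *\<^sub>R (mn X S - mn X T))" by simp
    then show ?thesis using p q by (simp add: divide_simps)
  qed
  have d2: "mn X T - w = (p / (p + q)) *\<^sub>R (mn X T - mn X S)"
  proof -
    have "(p + q) *\<^sub>R (mn X T - w) = p *\<^sub>R (mn X T - mn X S)"
      using hw by (simp add: algebra_simps)
    then have "(1/(p+q)) *\<^sub>R ((p + q) *\<^sub>R (mn X T - w)) = (1/(p+q)) *\<^sub>R (p *\<^sub>R (mn X T - mn X S))" by simp
    then show ?thesis using p q by (simp add: divide_simps)
  qed
  have "(\<Sum>n\<in>S \<union> T. (norm (X n - w))\<^sup>2) = (\<Sum>n\<in>S. (norm (X n - w))\<^sup>2) + (\<Sum>n\<in>T. (norm (X n - w))\<^sup>2)"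
    using assms by (simp add: sum.union_disjoint)
  also have "\<dots> = (\<Sum>n\<in>S. (norm (X n - mn X S))\<^sup>2) + p * (norm (mn X S - w))\<^sup>2
       + ((\<Sum>n\<in>T. (norm (X n - mn X T))\<^sup>2) + q * (norm (mn X T - w))\<^sup>2)"
    using parallel assms p_def q_def by metis
  finally have tot: "(\<Sum>n\<in>S \<union> T. (norm (X n - w))\<^sup>2) = (\<Sum>n\<in>S. (norm (X n - mn X S))\<^sup>2) + p * (norm (mn X S - w))\<^sup>2
       + ((\<Sum>n\<in>T. (norm (X n - mn X T))\<^sup>2) + q * (norm (mn X T - w))\<^sup>2)" .
  have eqq: "p * (norm (mn X S - w))\<^sup>2 + q * (norm (mn X T - w))\<^sup>2 = p * q / (p + q) * (norm (mn X S - mn X T))\<^sup>2"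
  proof -
    have nn: "norm (mn X T - mn X S) = norm (mn X S - mn X T)" by (rule norm_minus_commute)
    have "p * (norm (mn X S - w))\<^sup>2 + q * (norm (mn X T - w))\<^sup>2
        = (p * (q/(p+q))\<^sup>2 + q * (p/(p+q))\<^sup>2) * (norm (mn X S - mn X T))\<^sup>2"
    proof -
      have a1: "\<bar>q / (p + q)\<bar> = q / (p + q)" "\<bar>p / (p + q)\<bar> = p / (p + q)" using p q by auto
      show ?thesis unfolding d1 d2 norm_scaleR nn a1 power_mult_distrib by (simp add: algebra_simps)
    qed
    also have "p * (q/(p+q))\<^sup>2 + q * (p/(p+q))\<^sup>2 = p * q / (p + q)"
      using p q by (simp add: divide_simps power2_eq_square) (simp add: algebra_simps)
    finally show ?thesis .
  qed
  have "(\<Sum>n\<in>S \<union> T. (norm (X n - w))\<^sup>2) = (\<Sum>n\<in>S. (norm (X n - mn X S))\<^sup>2) + (\<Sum>n\<in>T. (norm (X n - mn X T))\<^sup>2)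
    + p * q / (p + q) * (norm (mn X S - mn X T))\<^sup>2" using tot eqq by linarith
  then show ?thesis unfolding w_def p_def q_def by simp
qed

lemma seg_loss_mn: "seg_loss X a b = (\<Sum>n\<in>{a<..b}. (norm (X n - mn X {a<..b}))\<^sup>2)"
  by (simp add: seg_loss_def seg_mean_def mn_def)

lemma seg_mean_mn: "seg_mean X a b = mn X {a<..b}"
  by (simp add: seg_mean_def mn_def)

lemma helper_key:
  fixes t n2 m N x y :: real
  assumes "t > 0"
  shows "(t * n2 / (t + n2) * y < m * t / N * x) = (n2 * y / (n2 + t) < m / N * x)"
proof -
  have 1: "t * n2 / (t + n2) * y = t * (n2 * y / (n2 + t))" by (simp add: add.commute)
  have 2: "m * t / N * x = t * (m / N * x)" by simp
  show ?thesis unfolding 1 2 by (rule mult_less_cancel_left_pos[OF assms])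
qed

lemma helper_rhs:
  fixes m N x :: real
  assumes "m > 0" "N > 0"
  shows "N * (m / N * x)\<^sup>2 / m = m / N * x\<^sup>2"
  using assms by (simp add: power2_eq_square field_simps)

theorem proposition1:
  fixes X :: "nat \<Rightarrow> 'a::euclidean_space" and N1 N2 t :: nat
  assumes "N1 \<ge> 1" and "N2 \<ge> 1" and "0 < t" and "t < N1"
  shows "seg_loss X 0 (N1 - t) + seg_loss X (N1 - t) (N1 + N2)
           < seg_loss X 0 N1 + seg_loss X N1 (N1 + N2)
         \<longleftrightarrow>
         real N1 * (norm (seg_mean X 0 N1 - seg_mean X (N1 - t) N1))\<^sup>2 / real (N1 - t)
           > real N2 * (norm (seg_mean X N1 (N1 + N2) - seg_mean X (N1 - t) N1))\<^sup>2 / real (N2 + t)"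
proof -
  define A where "A = {0<..N1 - t}"
  define B where "B = {N1 - t<..N1}"
  define C where "C = {N1<..N1 + N2}"
  define a where "a = mn X A"
  define b where "b = mn X B"
  define c where "c = mn X C"
  define LA where "LA = (\<Sum>n\<in>A. (norm (X n - a))\<^sup>2)"
  define LB where "LB = (\<Sum>n\<in>B. (norm (X n - b))\<^sup>2)"
  define LC where "LC = (\<Sum>n\<in>C. (norm (X n - c))\<^sup>2)"
  have cA: "card A = N1 - t" and cB: "card B = t" and cC: "card C = N2"
    using assms by (auto simp: A_def B_def C_def)
  have neA: "A \<noteq> {}" and neB: "B \<noteq> {}" and neC: "C \<noteq> {}"
    using assms by (auto simp: A_def B_def C_def)
  have fA: "finite A" "finite B" "finite C" by (auto simp: A_def B_def C_def)
  have AB: "{0<..N1} = A \<union> B" using assms by (auto simp: A_def B_def)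
  have BC: "{N1 - t<..N1 + N2} = B \<union> C" using assms by (auto simp: B_def C_def)
  have dAB: "A \<inter> B = {}" and dBC: "B \<inter> C = {}" by (auto simp: A_def B_def C_def)
  have old: "seg_loss X 0 N1 + seg_loss X N1 (N1 + N2) =
     LA + LB + LC + real (N1 - t) * real t / real N1 * (norm (a - b))\<^sup>2"
  proof -
    have "seg_loss X 0 N1 = LA + LB + real (N1 - t) * real t / (real (N1 - t) + real t) * (norm (a - b))\<^sup>2"
      unfolding seg_loss_mn AB using union_loss[OF fA(1) neA fA(2) neB dAB, of X] cA cB
      by (simp add: LA_def LB_def a_def b_def)
    moreover have "seg_loss X N1 (N1 + N2) = LC" by (simp add: seg_loss_mn LC_def c_def C_def)
    moreover have "real (N1 - t) + real t = real N1" using assms by simp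
    ultimately show ?thesis by simp
  qed
  have new: "seg_loss X 0 (N1 - t) + seg_loss X (N1 - t) (N1 + N2) =
     LA + LB + LC + real t * real N2 / (real t + real N2) * (norm (b - c))\<^sup>2"
  proof -
    have "seg_loss X (N1 - t) (N1 + N2) = LB + LC + real t * real N2 / (real t + real N2) * (norm (b - c))\<^sup>2"
      unfolding seg_loss_mn BC using union_loss[OF fA(2) neB fA(3) neC dBC, of X] cB cC
      by (simp add: LB_def LC_def b_def c_def)
    moreover have "seg_loss X 0 (N1 - t) = LA" by (simp add: seg_loss_mn LA_def a_def A_def)
    ultimately show ?thesis by simp
  qed
  have m0: "seg_mean X 0 N1 - seg_mean X (N1 - t) N1 = (real (N1 - t) / real N1) *\<^sub>R (a - b)"
  proof -
    have "real N1 *\<^sub>R mn X {0<..N1} = sum X {0<..N1}" using mn_sum[of "{0<..N1}" X] assms by simp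
    also have "\<dots> = sum X A + sum X B" unfolding AB using fA dAB by (simp add: sum.union_disjoint)
    also have "\<dots> = real (N1 - t) *\<^sub>R a + real t *\<^sub>R b"
      using mn_sum[OF fA(1) neA, of X] mn_sum[OF fA(2) neB, of X] cA cB a_def b_def by simp
    finally have h: "real N1 *\<^sub>R mn X {0<..N1} = real (N1 - t) *\<^sub>R a + real t *\<^sub>R b" .
    have rN: "real N1 = real (N1 - t) + real t" using assms by simp
    have "real N1 *\<^sub>R (mn X {0<..N1} - b) = real N1 *\<^sub>R mn X {0<..N1} - real N1 *\<^sub>R b"
      by (rule scaleR_right_diff_distrib)
    also have "\<dots> = real (N1 - t) *\<^sub>R a + real t *\<^sub>R b - (real (N1 - t) + real t) *\<^sub>R b"
      unfolding h by (simp only: rN[symmetric])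
    also have "\<dots> = real (N1 - t) *\<^sub>R (a - b)"
      by (simp only: scaleR_left_distrib scaleR_right_diff_distrib) simp
    finally have "real N1 *\<^sub>R (mn X {0<..N1} - b) = real (N1 - t) *\<^sub>R (a - b)" .
    then have "(1 / real N1) *\<^sub>R (real N1 *\<^sub>R (mn X {0<..N1} - b)) = (1 / real N1) *\<^sub>R (real (N1 - t) *\<^sub>R (a - b))"
      by simp
    then have "mn X {0<..N1} - b = (real (N1 - t) / real N1) *\<^sub>R (a - b)" using assms by simp
    then show ?thesis by (simp add: seg_mean_mn b_def B_def)
  qed
  have m1: "seg_mean X N1 (N1 + N2) - seg_mean X (N1 - t) N1 = c - b"
    by (simp add: seg_mean_mn b_def B_def c_def C_def)
  have N1p: "real N1 > 0" and mp: "real (N1 - t) > 0" and tp: "real t > 0" and N2p: "real N2 > 0"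
    using assms by auto
  have rhs: "real N1 * (norm (seg_mean X 0 N1 - seg_mean X (N1 - t) N1))\<^sup>2 / real (N1 - t)
     = real (N1 - t) / real N1 * (norm (a - b))\<^sup>2"
    unfolding m0 norm_scaleR using helper_rhs[OF mp N1p] N1p mp by simp
  have nbc: "norm (c - b) = norm (b - c)" by (rule norm_minus_commute)
  define d1 where "d1 = (norm (a - b))\<^sup>2"
  define d2 where "d2 = (norm (b - c))\<^sup>2"
  have key: "real t * real N2 / (real t + real N2) * d2 < real (N1 - t) * real t / real N1 * d1
     \<longleftrightarrow> real N2 * d2 / (real N2 + real t) < real (N1 - t) / real N1 * d1"
    by (rule helper_key[OF tp])
  show ?thesis unfolding old new rhs m1 nbc using key
    by (simp add: d1_def d2_def)
qed

end
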